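(* Let $G$ be a bipartite graph with bipartition $(X,Y)$, $|X| = n\geq 2$, $|Y|=m$, every $x\in X$ having degree at least $\delta$, and let $(C,x)$ be a tight pair in $G$. If $2 \leq |N(x)\cap V(C)| < |Y\cap V(C)|$ and $n \leq \delta$, then $m \geq 3\delta - 4$.
   Context: A tight pair in $G$ is a pair $(C,x)$ where $C$ is a longest cycle in $G$ and $x \in X \setminus V(C)$, chosen such that $|N(x)\cap V(C)|$ is maximum over all pairs $(C',x')$ with $C'$ a longest cycle in $G$ and $x' \in X\setminus V(C')$. *)

theory Defs
  imports Main
begin

definition bipartite_graph :: "'a set \<Rightarrow> 'a set \<Rightarrow> ('a \<Rightarrow> 'a \<Rightarrow> bool) \<Rightarrow> bool" where
  "bipartite_graph X Y E \<longleftrightarrow> finite X \<and> finite Y \<and> X \<inter> Y = {} \<and>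
     (\<forall>u v. E u v \<longrightarrow> E v u) \<and>
     (\<forall>u v. E u v \<longrightarrow> (u \<in> X \<and> v \<in> Y) \<or> (u \<in> Y \<and> v \<in> X))"

definition nbhd :: "('a \<Rightarrow> 'a \<Rightarrow> bool) \<Rightarrow> 'a \<Rightarrow> 'a set" where
  "nbhd E v = {u. E v u}"

text \<open>A cycle is given by the cyclic list of its (distinct) vertices, of length at least 3;
  consecutive vertices (cyclically) are adjacent. V(C) = set C, length of C = length C.\<close>
definition is_cycle :: "'a set \<Rightarrow> ('a \<Rightarrow> 'a \<Rightarrow> bool) \<Rightarrow> 'a list \<Rightarrow> bool" where
  "is_cycle V E C \<longleftrightarrow> length C \<ge> 3 \<and> distinct C \<and> set C \<subseteq> V \<and>
     (\<forall>i < length C. E (C ! i) (C ! ((i + 1) mod length C)))"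

definition longest_cycle :: "'a set \<Rightarrow> ('a \<Rightarrow> 'a \<Rightarrow> bool) \<Rightarrow> 'a list \<Rightarrow> bool" where
  "longest_cycle V E C \<longleftrightarrow> is_cycle V E C \<and>
     (\<forall>C'. is_cycle V E C' \<longrightarrow> length C' \<le> length C)"

definition tight_pair :: "'a set \<Rightarrow> 'a set \<Rightarrow> ('a \<Rightarrow> 'a \<Rightarrow> bool) \<Rightarrow> 'a list \<Rightarrow> 'a \<Rightarrow> bool" where
  "tight_pair X Y E C x \<longleftrightarrow> longest_cycle (X \<union> Y) E C \<and> x \<in> X - set C \<and>
     (\<forall>C' x'. longest_cycle (X \<union> Y) E C' \<and> x' \<in> X - set C' \<longrightarrow>
        card (nbhd E x' \<inter> set C') \<le> card (nbhd E x \<inter> set C))"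

end

theory Submission
  imports Defs
begin

lemma successively_upt: "(\<And>i. P i (Suc i)) \<Longrightarrow> successively P [a..<b]"
  by (auto simp: successively_conv_nth)

lemma is_cycleI:
  assumes "3 \<le> length xs" "distinct xs" "set xs \<subseteq> V" "successively E xs" "E (last xs) (hd xs)"
  shows "is_cycle V E xs"
  unfolding is_cycle_def
proof (intro conjI allI impI)
  fix i assume i: "i < length xs"
  show "E (xs ! i) (xs ! ((i + 1) mod length xs))"
  proof (cases "Suc i < length xs")
    case True then show ?thesis using successively_nth[OF assms(4) True] by simp
  next
    case False
    then have "i = length xs - 1" using i by simp
    moreover have "xs \<noteq> []" using assms(1) by auto
    ultimately show ?thesis using assms(5) i by (simp add: last_conv_nth hd_conv_nth)
  qed
qed (use assms in auto)

locale lc =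
  fixes X Y :: "'a set" and E :: "'a \<Rightarrow> 'a \<Rightarrow> bool" and C :: "'a list" and x :: 'a and \<delta> :: nat
  assumes bip: "bipartite_graph X Y E"
    and lcyc: "longest_cycle (X \<union> Y) E C"
    and xX: "x \<in> X" and xC: "x \<notin> set C"
    and tight: "\<And>C' x'. longest_cycle (X \<union> Y) E C' \<Longrightarrow> x' \<in> X - set C' \<Longrightarrow>
                   card (nbhd E x' \<inter> set C') \<le> card (nbhd E x \<inter> set C)"
    and deg: "\<And>v. v \<in> X \<Longrightarrow> \<delta> \<le> card (nbhd E v)"
    and x0: "E x (C ! 0)"
begin

definition L where "L = length C"
definition c where "c i = C ! (i mod L)"
definition d where "d = card (nbhd E x \<inter> set C)"

lemma symE: "E u v \<Longrightarrow> E v u" using bip unfolding bipartite_graph_def by blast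
lemma sides: "E u v \<Longrightarrow> (u \<in> X \<and> v \<in> Y) \<or> (u \<in> Y \<and> v \<in> X)"
  using bip unfolding bipartite_graph_def by blast
lemma XY: "X \<inter> Y = {}" using bip unfolding bipartite_graph_def by blast
lemma finX: "finite X" and finY: "finite Y" using bip unfolding bipartite_graph_def by auto

lemma cyc: "is_cycle (X \<union> Y) E C" using lcyc unfolding longest_cycle_def by blast
lemma maxlen: "is_cycle (X \<union> Y) E C' \<Longrightarrow> length C' \<le> L"
  using lcyc unfolding longest_cycle_def L_def by blast
lemma L3: "3 \<le> L" using cyc unfolding is_cycle_def L_def by blast
lemma distC: "distinct C" using cyc unfolding is_cycle_def by blast
lemma setC: "set C \<subseteq> X \<union> Y" using cyc unfolding is_cycle_def by blast
lemma edgeC: "i < L \<Longrightarrow> E (C ! i) (C ! ((i + 1) mod L))" using cyc unfolding is_cycle_def L_def by blast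

lemma c_edge: "E (c i) (c (Suc i))"
proof -
  have "i mod L < L" using L3 by simp
  from edgeC[OF this] show ?thesis unfolding c_def by (simp add: mod_Suc_eq)
qed
lemma c_per: "c (i + L) = c i" unfolding c_def by simp
lemma c_per2: "c (L + i) = c i" unfolding c_def by simp
lemma Lpos: "0 < L" using L3 by simp
lemma c_in: "c i \<in> set C" unfolding c_def using Lpos L_def by simp
lemma c_inXY: "c i \<in> X \<union> Y" using c_in setC by blast
lemma c_lt: "i < L \<Longrightarrow> c i = C ! i" unfolding c_def by simp

lemma c_inj: "inj_on c {s..<s+L}"
proof (rule inj_onI)
  fix i j assume i: "i \<in> {s..<s+L}" and j: "j \<in> {s..<s+L}" and e: "c i = c j"
  have "i mod L = j mod L" using e distC L3 unfolding c_def L_def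
    using Lpos L_def by (subst (asm) nth_eq_iff_index_eq) auto
  then show "i = j" using i j
  proof -
    have "\<And>i j. i \<in> {s..<s+L} \<Longrightarrow> j \<in> {s..<s+L} \<Longrightarrow> i mod L = j mod L \<Longrightarrow> i \<le> j \<Longrightarrow> i = j"
    proof -
      fix i j assume i: "i \<in> {s..<s+L}" and j: "j \<in> {s..<s+L}" and m: "i mod L = j mod L" and le: "i \<le> j"
      have "L dvd j - i" using m mod_eq_dvd_iff_nat[OF le, of L] by simp
      moreover have "j - i < L" using i j by auto
      ultimately have "j - i = 0" by (metis dvd_imp_le neq0_conv not_le)
      then show "i = j" using le by simp
    qed
    then show ?thesis using i j \<open>i mod L = j mod L\<close> by (metis nat_le_linear)
  qed
qed

lemma c_img: "c ` {s..<s+L} = set C"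
proof -
  have sub: "c ` {s..<s+L} \<subseteq> set C" using c_in by blast
  have "card (c ` {s..<s+L}) = L" using c_inj by (simp add: card_image)
  also have "\<dots> = card (set C)" using distC L_def by (simp add: distinct_card)
  finally show ?thesis using sub by (simp add: card_subset_eq)
qed


lemma inXY1: "E u v \<Longrightarrow> u \<in> X \<union> Y" using sides by blast
lemma inXY2: "E u v \<Longrightarrow> v \<in> X \<union> Y" using sides by blast
lemma nbrX: "E u v \<Longrightarrow> u \<in> X \<Longrightarrow> v \<in> Y" using sides XY by blast
lemma nbrY: "E u v \<Longrightarrow> u \<in> Y \<Longrightarrow> v \<in> X" using sides XY by blast

lemma c0Y: "c 0 \<in> Y"
proof -
  have "E x (c 0)" using x0 unfolding c_def by simp
  then show ?thesis using nbrX xX by blast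
qed

lemma par: "(c i \<in> Y \<longleftrightarrow> even i) \<and> (c i \<in> X \<longleftrightarrow> odd i)"
proof (induction i)
  case 0 then show ?case using c0Y XY by auto
next
  case (Suc i)
  have e: "E (c i) (c (Suc i))" by (rule c_edge)
  show ?case
  proof (cases "even i")
    case True
    then have "c i \<in> Y" using Suc by blast
    then have "c (Suc i) \<in> X" using nbrY e by blast
    then show ?thesis using True XY by auto
  next
    case False
    then have "c i \<in> X" using Suc by blast
    then have "c (Suc i) \<in> Y" using nbrX e by blast
    then show ?thesis using False XY by auto
  qed
qed
lemma parY: "c i \<in> Y \<longleftrightarrow> even i" using par by blast
lemma parX: "c i \<in> X \<longleftrightarrow> odd i" using par by blast
lemma Leven: "even L" using parY[of L] parY[of 0] c_per2[of 0] by simp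

definition fwd where "fwd a b = map c [a..<b]"
lemma fwd_succ: "successively E (fwd a b)"
  unfolding fwd_def successively_map by (rule successively_upt) (rule c_edge)
lemma fwd_rsucc: "successively E (rev (fwd a b))"
  unfolding fwd_def successively_rev successively_map by (rule successively_upt) (rule symE, rule c_edge)
lemma fwd_len[simp]: "length (fwd a b) = b - a" unfolding fwd_def by simp
lemma fwd_set[simp]: "set (fwd a b) = c ` {a..<b}" unfolding fwd_def by simp
lemma fwd_nil[simp]: "fwd a b = [] \<longleftrightarrow> b \<le> a" unfolding fwd_def by auto
lemma fwd_hd[simp]: "a < b \<Longrightarrow> hd (fwd a b) = c a" unfolding fwd_def by (simp add: upt_conv_Cons)
lemma fwd_last[simp]: "a < b \<Longrightarrow> last (fwd a b) = c (b - 1)" unfolding fwd_def by (simp add: last_map)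
lemma fwd_XY: "set (fwd a b) \<subseteq> X \<union> Y" using c_inXY by auto

lemma cardC: "card (set C) = L" using distC L_def by (simp add: distinct_card)

lemma longer_False:
  assumes "successively E NC" "NC \<noteq> []" "E (last NC) (hd NC)" "set NC \<subseteq> X \<union> Y"
    "length NC = L + 2" "set C \<subseteq> set NC" "x \<in> set NC" "z \<in> set NC" "z \<notin> set C" "z \<noteq> x"
  shows False
proof -
  have "insert x (insert z (set C)) \<subseteq> set NC" using assms by blast
  moreover have "card (insert x (insert z (set C))) = L + 2"
    using assms(9,10) xC cardC by simp
  ultimately have "L + 2 \<le> card (set NC)" by (metis card_mono List.finite_set)
  moreover have "card (set NC) \<le> length NC" by (rule card_length)
  ultimately have "card (set NC) = length NC" using assms(5) by simp
  then have "distinct NC" by (rule card_distinct)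
  then have "is_cycle (X \<union> Y) E NC" using assms L3 by (intro is_cycleI) auto
  then have "length NC \<le> L" by (rule maxlen)
  then show False using assms(5) by simp
qed

lemma swap_tight:
  assumes "successively E NC" "NC \<noteq> []" "E (last NC) (hd NC)"
    "set NC = insert x (set C - {t})" "length NC = L" "t \<in> set C" "t \<in> X"
  shows "card (nbhd E t \<inter> set C) \<le> d"
proof -
  have "card (insert x (set C - {t})) = L" using assms(6) xC cardC L3
    by (simp add: card_Diff_singleton)
  then have "distinct NC" using assms(4,5) by (intro card_distinct) simp
  moreover have "set NC \<subseteq> X \<union> Y" unfolding assms(4) using setC xX by blast
  ultimately have cy: "is_cycle (X \<union> Y) E NC" using assms L3 by (intro is_cycleI) auto
  have "longest_cycle (X \<union> Y) E NC" unfolding longest_cycle_def using cy maxlen assms(5) by simp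
  moreover have "t \<in> X - set NC" using assms(4,6,7) xC by auto
  ultimately have "card (nbhd E t \<inter> set NC) \<le> d" unfolding d_def by (rule tight)
  moreover have "nbhd E t \<inter> set NC = nbhd E t \<inter> set C"
  proof -
    have "\<And>u. E t u \<Longrightarrow> u \<noteq> x \<and> u \<noteq> t" using nbrX assms(7) xX XY by blast
    then show ?thesis using assms(4) unfolding nbhd_def by auto
  qed
  ultimately show ?thesis by simp
qed


lemma cT_edge: "0 < T \<Longrightarrow> E (c (T - 1)) (c T)" using c_edge[of "T - 1"] by simp
lemma cT_edge': "0 < T \<Longrightarrow> E (c T) (c (T - 1))" using cT_edge symE by blast
lemma cS_edge': "E (c (Suc T)) (c T)" using c_edge symE by blast
lemma cL: "c (a + L) = c a" by (rule c_per)

lemma fwd_rsucc2: "successively (\<lambda>u v. E v u) (fwd a b)"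
  using fwd_rsucc by simp
lemmas lsimps = fwd_rsucc2 successively_append_iff successively_Cons fwd_succ fwd_rsucc hd_rev last_rev hd_append last_append

lemma F1a:
  assumes "E x (c a)" "E z x" "E z (c (Suc a))" "z \<notin> set C"
  shows False
proof -
  define NC where "NC = [x, z] @ fwd (Suc a) (a + L + 1)"
  have ne: "Suc a < a + L + 1" using L3 by simp
  show False
  proof (rule longer_False[of NC z])
    show "successively E NC" using ne assms symE by (simp add: NC_def lsimps)
    show "NC \<noteq> []" by (simp add: NC_def)
    show "E (last NC) (hd NC)" using ne assms symE by (simp add: NC_def cL[of a])
    show "set NC \<subseteq> X \<union> Y" using xX inXY1[OF assms(2)] fwd_XY by (auto simp: NC_def)
    show "length NC = L + 2" by (simp add: NC_def)
    have "set C = c ` {Suc a..<Suc a + L}" using c_img[of "Suc a"] by simp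
    then show "set C \<subseteq> set NC" by (auto simp: NC_def)
    show "x \<in> set NC" "z \<in> set NC" by (auto simp: NC_def)
    show "z \<notin> set C" by fact
    show "z \<noteq> x" using assms(2) sides XY by blast
  qed
qed

lemma F1b:
  assumes "E x (c a)" "E x (c b)" "a < b" "b < a + L" "E z (c (Suc a))" "E z (c (Suc b))" "z \<notin> set C" "z \<noteq> x"
  shows False
proof -
  define NC where "NC = [x] @ rev (fwd (Suc b) (a + L + 1)) @ [z] @ fwd (Suc a) (Suc b)"
  have ne1: "Suc b < a + L + 1" using assms by simp
  have ne2: "Suc a < Suc b" using assms by simp
  show False
  proof (rule longer_False[of NC z])
    show "successively E NC" using ne1 ne2 assms symE by (simp add: NC_def lsimps cL[of a])
    show "NC \<noteq> []" by (simp add: NC_def)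
    show "E (last NC) (hd NC)" using ne1 ne2 assms symE by (simp add: NC_def)
    show "set NC \<subseteq> X \<union> Y" using xX inXY1[OF assms(5)] fwd_XY by (auto simp: NC_def)
    show "length NC = L + 2" using assms by (simp add: NC_def)
    have "set C = c ` {Suc a..<Suc a + L}" using c_img[of "Suc a"] by simp
    also have "\<dots> \<subseteq> c ` ({Suc b..<a + L + 1} \<union> {Suc a..<Suc b})" by (rule image_mono) (use assms in auto)
    finally show "set C \<subseteq> set NC" by (auto simp: NC_def image_Un)
    show "x \<in> set NC" "z \<in> set NC" by (auto simp: NC_def)
  qed (use assms in auto)
qed

lemma GCL:
  assumes "E x (c P0)" "E x (c Q0)" "P0 + 2 \<le> Q0" "Q0 + 3 \<le> T" "T + 1 \<le> P0 + L"
    "E (c (Suc P0)) (c (T - 1))" "E (c (Suc Q0)) (c (Suc T))"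
  shows "card (nbhd E (c T) \<inter> set C) \<le> d"
proof -
  define NC where "NC = [x] @ rev (fwd (Suc P0) (Suc Q0)) @ rev (fwd (Suc Q0) T) @ fwd (Suc T) (P0 + L + 1)"
  have "c (Suc T) \<in> Y" using nbrX assms(7) parX[of "Suc Q0"] parY[of Q0] nbrX[OF assms(2) xX] by auto
  then have cTX: "c T \<in> X" using parX parY by simp
  show ?thesis
  proof (rule swap_tight[of NC])
    show "successively E NC" using assms symE by (simp add: NC_def lsimps)
    show "NC \<noteq> []" by (simp add: NC_def)
    show "E (last NC) (hd NC)" using assms symE by (simp add: NC_def cL[of P0])
    show "length NC = L" using assms by (simp add: NC_def)
    show "c T \<in> set C" by (rule c_in)
    show "c T \<in> X" by fact
    have "set C - {c T} = c ` {Suc P0..<Suc P0 + L} - c ` {T}" using c_img[of "Suc P0"] by simp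
    also have "\<dots> = c ` ({Suc P0..<Suc P0 + L} - {T})"
      using assms by (intro inj_on_image_set_diff[OF c_inj, symmetric]) auto
    also have "{Suc P0..<Suc P0 + L} - {T} = {Suc P0..<Suc Q0} \<union> {Suc Q0..<T} \<union> {Suc T..<P0 + L + 1}"
      using assms by auto
    finally show "set NC = insert x (set C - {c T})" by (auto simp: NC_def image_Un)
  qed
qed

lemma G1:
  assumes "E x (c a)" "E x (c (a + 2))"
  shows "card (nbhd E (c (Suc a)) \<inter> set C) \<le> d"
proof -
  define NC where "NC = [x] @ fwd (a + 2) (a + L + 1)"
  have "c (Suc a) \<in> X" using nbrX[OF assms(1) xX] parX parY by simp
  show ?thesis
  proof (rule swap_tight[of NC])
    show "successively E NC" using assms symE L3 by (simp add: NC_def lsimps)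
    show "NC \<noteq> []" by (simp add: NC_def)
    show "E (last NC) (hd NC)" using assms symE L3 by (simp add: NC_def cL[of a])
    show "length NC = L" using L3 by (simp add: NC_def)
    show "c (Suc a) \<in> set C" by (rule c_in)
    show "c (Suc a) \<in> X" by fact
    have "set C - {c (Suc a)} = c ` {Suc a..<Suc a + L} - c ` {Suc a}" using c_img[of "Suc a"] by simp
    also have "\<dots> = c ` ({Suc a..<Suc a + L} - {Suc a})"
      using L3 by (intro inj_on_image_set_diff[OF c_inj, symmetric]) auto
    also have "{Suc a..<Suc a + L} - {Suc a} = {a + 2..<a + L + 1}" by auto
    finally show "set NC = insert x (set C - {c (Suc a)})" by (auto simp: NC_def)
  qed
qed

lemma DisjX:
  assumes "E x (c Q0)" "Q0 + 3 \<le> T" "T + 1 \<le> Q0 + L" "E (c (Suc Q0)) (c (Suc T))"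
    "E z x" "E z (c T)" "z \<notin> set C"
  shows False
proof -
  define NC where "NC = [x, z, c T] @ rev (fwd (Suc Q0) T) @ fwd (Suc T) (Q0 + L + 1)"
  show False
  proof (rule longer_False[of NC z])
    show "successively E NC" using assms symE cT_edge'[of T] by (simp add: NC_def lsimps)
    show "NC \<noteq> []" by (simp add: NC_def)
    show "E (last NC) (hd NC)" using assms symE by (simp add: NC_def cL[of Q0])
    show "set NC \<subseteq> X \<union> Y" using xX inXY1[OF assms(5)] fwd_XY c_inXY by (auto simp: NC_def)
    show "length NC = L + 2" using assms by (simp add: NC_def)
    have "set C = c ` {Suc Q0..<Suc Q0 + L}" using c_img[of "Suc Q0"] by simp
    also have "\<dots> \<subseteq> c ` ({T} \<union> {Suc Q0..<T} \<union> {Suc T..<Q0 + L + 1})" by (rule image_mono) (use assms in auto)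
    finally show "set C \<subseteq> set NC" by (auto simp: NC_def image_Un)
    show "x \<in> set NC" "z \<in> set NC" by (auto simp: NC_def)
    show "z \<noteq> x" using assms(5) sides XY by blast
  qed (use assms in auto)
qed

lemma DisjL:
  assumes "E x (c P0)" "E x (c Lp)" "P0 + 2 \<le> Lp" "Lp + 2 \<le> T" "T + 1 \<le> P0 + L"
    "E (c (Suc P0)) (c (T - 1))" "E z (c T)" "E z (c (Suc Lp))" "z \<notin> set C" "z \<noteq> x"
  shows False
proof -
  define NC where "NC = [x] @ rev (fwd (Suc T) (P0 + L + 1)) @ [c T, z] @ fwd (Suc Lp) T @ fwd (Suc P0) (Suc Lp)"
  show False
  proof (rule longer_False[of NC z])
    show "successively E NC" using assms symE cS_edge'[of T] by (simp add: NC_def lsimps cL[of P0])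
    show "NC \<noteq> []" by (simp add: NC_def)
    show "E (last NC) (hd NC)" using assms symE by (simp add: NC_def)
    show "set NC \<subseteq> X \<union> Y" using xX inXY1[OF assms(7)] fwd_XY c_inXY by (auto simp: NC_def)
    show "length NC = L + 2" using assms by (simp add: NC_def)
    have "set C = c ` {Suc P0..<Suc P0 + L}" using c_img[of "Suc P0"] by simp
    also have "\<dots> \<subseteq> c ` ({Suc T..<P0 + L + 1} \<union> {T} \<union> {Suc Lp..<T} \<union> {Suc P0..<Suc Lp})" by (rule image_mono) (use assms in auto)
    finally show "set C \<subseteq> set NC" by (auto simp: NC_def image_Un)
    show "x \<in> set NC" "z \<in> set NC" by (auto simp: NC_def)
  qed (use assms in auto)
qed

lemma DisjR:
  assumes "E x (c Q0)" "E x (c Lp)" "Q0 + 3 \<le> T" "T + 1 \<le> Lp" "Lp + 2 \<le> Q0 + L"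
    "E (c (Suc Q0)) (c (Suc T))" "E z (c T)" "E z (c (Suc Lp))" "z \<notin> set C" "z \<noteq> x"
  shows False
proof -
  define NC where "NC = [x] @ rev (fwd (Suc T) (Suc Lp)) @ fwd (Suc Q0) (Suc T) @ [z] @ fwd (Suc Lp) (Q0 + L + 1)"
  show False
  proof (rule longer_False[of NC z])
    show "successively E NC" using assms symE by (simp add: NC_def lsimps)
    show "NC \<noteq> []" by (simp add: NC_def)
    show "E (last NC) (hd NC)" using assms symE by (simp add: NC_def cL[of Q0])
    show "set NC \<subseteq> X \<union> Y" using xX inXY1[OF assms(7)] fwd_XY c_inXY by (auto simp: NC_def)
    show "length NC = L + 2" using assms by (simp add: NC_def)
    have "set C = c ` {Suc Q0..<Suc Q0 + L}" using c_img[of "Suc Q0"] by simp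
    also have "\<dots> \<subseteq> c ` ({Suc T..<Suc Lp} \<union> {Suc Q0..<Suc T} \<union> {Suc Lp..<Q0 + L + 1})" by (rule image_mono) (use assms in auto)
    finally show "set C \<subseteq> set NC" by (auto simp: NC_def image_Un)
    show "x \<in> set NC" "z \<in> set NC" by (auto simp: NC_def)
  qed (use assms in auto)
qed


definition P where "P = {i. i < L \<and> E x (c i)}"
definition a where "a i = c (Suc i)"
definition Ycols where "Ycols = {u. 0 < u \<and> u \<le> L \<and> even u}"
definition k where "k = card Ycols"
definition mis where "mis \<alpha> = card {u \<in> Ycols. \<not> E (a \<alpha>) (c u)}"
definition nx where "nx \<alpha> = (if \<exists>\<beta>\<in>P. \<alpha> < \<beta> then Min {\<beta> \<in> P. \<alpha> < \<beta>} else L)"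

lemma finP: "finite P" unfolding P_def by simp
lemma P_lt: "p \<in> P \<Longrightarrow> p < L" unfolding P_def by simp
lemma P_x: "p \<in> P \<Longrightarrow> E x (c p)" unfolding P_def by simp
lemma P0: "0 \<in> P" unfolding P_def using x0 Lpos by (simp add: c_def)
lemma xc_even: "E x (c i) \<Longrightarrow> even i" using nbrX xX parY by blast
lemma P_even: "p \<in> P \<Longrightarrow> even p" using P_x xc_even by blast
lemma cL0: "c L = c 0" using c_per2[of 0] by simp
lemma aX: "even i \<Longrightarrow> a i \<in> X" unfolding a_def using parX by simp
lemma finN: "finite (nbhd E v)"
proof -
  have "nbhd E v \<subseteq> X \<union> Y" unfolding nbhd_def using inXY2 by blast
  then show ?thesis using finX finY finite_subset by blast
qed

lemma card_P: "card P = d"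
proof -
  have "nbhd E x \<inter> set C = c ` P"
  proof
    show "c ` P \<subseteq> nbhd E x \<inter> set C" unfolding P_def nbhd_def using c_in by auto
    show "nbhd E x \<inter> set C \<subseteq> c ` P"
    proof
      fix u assume u: "u \<in> nbhd E x \<inter> set C"
      then obtain i where "i \<in> {0..<0+L}" "u = c i" using c_img[of 0] by blast
      then show "u \<in> c ` P" using u unfolding P_def nbhd_def by auto
    qed
  qed
  moreover have "inj_on c P" using c_inj[of 0] by (rule inj_on_subset) (auto simp: P_def)
  ultimately show ?thesis unfolding d_def by (simp add: card_image)
qed

lemma Ycols_img: "Ycols = (\<lambda>j. 2 * j + 2) ` {0..<L div 2}"
proof
  show "Ycols \<subseteq> (\<lambda>j. 2 * j + 2) ` {0..<L div 2}"
  proof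
    fix u assume "u \<in> Ycols"
    then have u: "0 < u" "u \<le> L" "even u" unfolding Ycols_def by auto
    then obtain m where m: "u = 2 * m" by (auto elim!: evenE)
    then have "m \<ge> 1" using u by simp
    then obtain j where "u = 2 * j + 2" using m by (intro that[of "m - 1"]) simp
    moreover have "j < L div 2" using u Leven \<open>u = 2 * j + 2\<close> by (auto elim!: evenE)
    ultimately show "u \<in> (\<lambda>j. 2 * j + 2) ` {0..<L div 2}" by auto
  qed
  show "(\<lambda>j. 2 * j + 2) ` {0..<L div 2} \<subseteq> Ycols" unfolding Ycols_def using Leven by (auto elim!: evenE)
qed

lemma k_val: "k = L div 2"
proof -
  have "inj_on (\<lambda>j::nat. 2 * j + 2) {0..<L div 2}" by (auto simp: inj_on_def)
  then show ?thesis unfolding k_def Ycols_img by (simp add: card_image)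
qed

lemma finYc: "finite Ycols" unfolding Ycols_def by simp
lemma Ycols_sub: "Ycols \<subseteq> {1..<1+L}" unfolding Ycols_def by auto
lemma c_inj_Y: "inj_on c Ycols" using c_inj[of 1] Ycols_sub by (rule inj_on_subset)

lemma YC_img: "Y \<inter> set C = c ` Ycols"
proof
  show "c ` Ycols \<subseteq> Y \<inter> set C" unfolding Ycols_def using c_in parY by auto
  show "Y \<inter> set C \<subseteq> c ` Ycols"
  proof
    fix u assume u: "u \<in> Y \<inter> set C"
    then obtain i where i: "i \<in> {1..<1+L}" "u = c i" using c_img[of 1] by blast
    then have "even i" using u parY by blast
    then show "u \<in> c ` Ycols" using i unfolding Ycols_def by auto
  qed
qed

lemma card_YC: "card (Y \<inter> set C) = k"
  unfolding YC_img k_def using c_inj_Y by (simp add: card_image)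

lemma card_XC: "card (X \<inter> set C) = k"
proof -
  have "set C = (X \<inter> set C) \<union> (Y \<inter> set C)" using setC by blast
  moreover have "(X \<inter> set C) \<inter> (Y \<inter> set C) = {}" using XY by blast
  ultimately have "card (set C) = card (X \<inter> set C) + card (Y \<inter> set C)"
    by (metis card_Un_disjoint List.finite_set finite_Int)
  then show ?thesis using cardC card_YC k_val Leven by auto
qed

lemma nbhd_C: "v \<in> X \<Longrightarrow> nbhd E v \<inter> set C = c ` {u \<in> Ycols. E v (c u)}"
proof -
  assume v: "v \<in> X"
  have "nbhd E v \<inter> set C = nbhd E v \<inter> (Y \<inter> set C)" using nbrX v unfolding nbhd_def by blast
  also have "\<dots> = c ` {u \<in> Ycols. E v (c u)}" unfolding YC_img nbhd_def by auto
  finally show ?thesis .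
qed

lemma card_nbhd_a: "even \<alpha> \<Longrightarrow> card (nbhd E (a \<alpha>) \<inter> set C) = k - mis \<alpha>"
proof -
  assume ev: "even \<alpha>"
  have "card (nbhd E (a \<alpha>) \<inter> set C) = card {u \<in> Ycols. E (a \<alpha>) (c u)}"
    unfolding nbhd_C[OF aX[OF ev]] using c_inj_Y by (intro card_image) (rule inj_on_subset, auto)
  also have "\<dots> = card Ycols - card {u \<in> Ycols. \<not> E (a \<alpha>) (c u)}"
  proof -
    have "Ycols = {u \<in> Ycols. E (a \<alpha>) (c u)} \<union> {u \<in> Ycols. \<not> E (a \<alpha>) (c u)}" by auto
    then have "card Ycols = card {u \<in> Ycols. E (a \<alpha>) (c u)} + card {u \<in> Ycols. \<not> E (a \<alpha>) (c u)}"
      using finYc by (subst card_Un_disjoint[symmetric]) auto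
    then show ?thesis by simp
  qed
  finally show ?thesis unfolding k_def mis_def .
qed

lemma sep_card:
  fixes A B S :: "nat set"
  assumes "finite S" "A \<subseteq> S" "B \<subseteq> S" "\<And>p q. p \<in> A \<Longrightarrow> q \<in> B \<Longrightarrow> q \<le> p"
  shows "card A + card B \<le> card S + 1"
proof -
  have fA: "finite A" "finite B" using assms(1,2,3) by (auto intro: finite_subset)
  have "\<forall>u\<in>A \<inter> B. \<forall>v\<in>A \<inter> B. u = v" using assms(4) by (meson IntD1 IntD2 le_antisym)
  then have "card (A \<inter> B) \<le> Suc 0" using card_le_Suc0_iff_eq[of "A \<inter> B"] fA by auto
  moreover have "card (A \<union> B) \<le> card S" using assms by (intro card_mono) auto
  moreover have "card (A \<union> B) + card (A \<inter> B) = card A + card B" using fA by (rule card_Un_Int[symmetric])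
  ultimately show ?thesis by linarith
qed


lemma nx_cases: "\<alpha> \<in> P \<Longrightarrow> (nx \<alpha> \<in> P \<and> \<alpha> < nx \<alpha> \<and> (\<forall>\<beta>\<in>P. \<alpha> < \<beta> \<longrightarrow> nx \<alpha> \<le> \<beta>)) \<or> (nx \<alpha> = L \<and> (\<forall>\<beta>\<in>P. \<not> \<alpha> < \<beta>))"
proof -
  assume aP: "\<alpha> \<in> P"
  show ?thesis
  proof (cases "\<exists>\<beta>\<in>P. \<alpha> < \<beta>")
    case True
    let ?S = "{\<beta> \<in> P. \<alpha> < \<beta>}"
    have fin: "finite ?S" using finP by simp
    have ne: "?S \<noteq> {}" using True by blast
    have "nx \<alpha> = Min ?S" unfolding nx_def using True by simp
    moreover have "Min ?S \<in> ?S" using fin ne by (rule Min_in)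
    moreover have "\<forall>\<beta>\<in>P. \<alpha> < \<beta> \<longrightarrow> Min ?S \<le> \<beta>" using fin by auto
    ultimately show ?thesis by auto
  next
    case False then show ?thesis unfolding nx_def by auto
  qed
qed

lemma nx_gt: "\<alpha> \<in> P \<Longrightarrow> \<alpha> < nx \<alpha>" using nx_cases P_lt by fastforce
lemma nx_le: "\<alpha> \<in> P \<Longrightarrow> nx \<alpha> \<le> L" using nx_cases P_lt by fastforce
lemma nx_P: "\<alpha> \<in> P \<Longrightarrow> nx \<alpha> < L \<Longrightarrow> nx \<alpha> \<in> P" using nx_cases by fastforce
lemma nx_min: "\<alpha> \<in> P \<Longrightarrow> \<beta> \<in> P \<Longrightarrow> \<alpha> < \<beta> \<Longrightarrow> nx \<alpha> \<le> \<beta>" using nx_cases by fastforce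
lemma nx_gapP: "\<alpha> \<in> P \<Longrightarrow> \<alpha> < i \<Longrightarrow> i < nx \<alpha> \<Longrightarrow> i \<notin> P" using nx_min by fastforce
lemma nx_gap: "\<alpha> \<in> P \<Longrightarrow> \<alpha> < i \<Longrightarrow> i < nx \<alpha> \<Longrightarrow> \<not> E x (c i)"
proof -
  assume h: "\<alpha> \<in> P" "\<alpha> < i" "i < nx \<alpha>"
  then have "i < L" using nx_le by fastforce
  then show ?thesis using nx_gapP[OF h] unfolding P_def by simp
qed
lemma nx_x: "\<alpha> \<in> P \<Longrightarrow> E x (c (nx \<alpha>))"
  using nx_cases P_x P0 cL0 by fastforce
lemma nx_even: "\<alpha> \<in> P \<Longrightarrow> even (nx \<alpha>)" using nx_x xc_even by blast
lemma nx_L: "\<alpha> \<in> P \<Longrightarrow> nx \<alpha> = L \<Longrightarrow> \<beta> \<in> P \<Longrightarrow> \<beta> \<le> \<alpha>"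
  using nx_cases[of \<alpha>] P_lt[of L] by (auto simp: not_less)

definition AC where "AC \<alpha> = {u. \<alpha> < u \<and> u \<le> nx \<alpha> \<and> even u}"
definition g where "g \<alpha> = (nx \<alpha> - \<alpha>) div 2"

lemma AC_img: "\<alpha> \<in> P \<Longrightarrow> AC \<alpha> = (\<lambda>j. \<alpha> + 2 * j + 2) ` {0..<g \<alpha>}"
proof -
  assume aP: "\<alpha> \<in> P"
  have ea: "even \<alpha>" and en: "even (nx \<alpha>)" and lt: "\<alpha> < nx \<alpha>" using aP P_even nx_even nx_gt by auto
  show ?thesis
  proof
    show "AC \<alpha> \<subseteq> (\<lambda>j. \<alpha> + 2 * j + 2) ` {0..<g \<alpha>}"
    proof
      fix u assume "u \<in> AC \<alpha>"
      then have u: "\<alpha> < u" "u \<le> nx \<alpha>" "even u" unfolding AC_def by auto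
      obtain m where m: "u - \<alpha> = 2 * m" using u ea by (metis dvd_diff_nat evenE)
      then have "m \<ge> 1" using u by simp
      moreover have "m - 1 < g \<alpha>" using m u en ea unfolding g_def by (auto elim!: evenE)
      ultimately show "u \<in> (\<lambda>j. \<alpha> + 2 * j + 2) ` {0..<g \<alpha>}" using m u(1)
        by (intro image_eqI[of _ _ "m - 1"]) auto
    qed
    show "(\<lambda>j. \<alpha> + 2 * j + 2) ` {0..<g \<alpha>} \<subseteq> AC \<alpha>"
      unfolding AC_def g_def using ea en lt by (auto elim!: evenE)
  qed
qed

lemma card_AC: "\<alpha> \<in> P \<Longrightarrow> card (AC \<alpha>) = g \<alpha>"
proof -
  assume "\<alpha> \<in> P"
  moreover have "inj_on (\<lambda>j. \<alpha> + 2 * j + 2) {0..<g \<alpha>}" by (auto simp: inj_on_def)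
  ultimately show ?thesis by (simp add: AC_img card_image)
qed

lemma g_pos: "\<alpha> \<in> P \<Longrightarrow> 1 \<le> g \<alpha>"
  using nx_gt[of \<alpha>] nx_even[of \<alpha>] P_even[of \<alpha>] unfolding g_def by (auto elim!: evenE)

lemma AC_Y: "\<alpha> \<in> P \<Longrightarrow> AC \<alpha> \<subseteq> Ycols"
  unfolding AC_def Ycols_def using nx_le P_lt by fastforce

lemma AC_disj: "\<alpha> \<in> P \<Longrightarrow> \<beta> \<in> P \<Longrightarrow> \<alpha> \<noteq> \<beta> \<Longrightarrow> AC \<alpha> \<inter> AC \<beta> = {}"
proof -
  have *: "AC \<alpha> \<inter> AC \<beta> = {}" if "\<alpha> \<in> P" "\<beta> \<in> P" "\<alpha> < \<beta>" for \<alpha> \<beta>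
    using nx_min[OF that] unfolding AC_def by auto
  assume "\<alpha> \<in> P" "\<beta> \<in> P" "\<alpha> \<noteq> \<beta>"
  then show ?thesis using *[of \<alpha> \<beta>] *[of \<beta> \<alpha>] by (cases "\<alpha> < \<beta>") auto
qed

lemma AC_cover: "Ycols = (\<Union>\<alpha>\<in>P. AC \<alpha>)"
proof
  show "(\<Union>\<alpha>\<in>P. AC \<alpha>) \<subseteq> Ycols" using AC_Y by blast
  show "Ycols \<subseteq> (\<Union>\<alpha>\<in>P. AC \<alpha>)"
  proof
    fix u assume u: "u \<in> Ycols"
    let ?S = "{\<beta> \<in> P. \<beta> < u}"
    have fin: "finite ?S" using finP by simp
    have ne: "?S \<noteq> {}" using P0 u unfolding Ycols_def by auto
    define \<alpha> where "\<alpha> = Max ?S"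
    have aS: "\<alpha> \<in> ?S" unfolding \<alpha>_def using fin ne by (rule Max_in)
    have amax: "\<And>\<beta>. \<beta> \<in> ?S \<Longrightarrow> \<beta> \<le> \<alpha>" unfolding \<alpha>_def using fin by simp
    have "u \<le> nx \<alpha>"
    proof (rule ccontr)
      assume "\<not> u \<le> nx \<alpha>"
      then have "nx \<alpha> < u" by simp
      moreover have "u \<le> L" using u unfolding Ycols_def by simp
      ultimately have "nx \<alpha> \<in> P" using nx_P aS by simp
      then have "nx \<alpha> \<le> \<alpha>" using amax \<open>nx \<alpha> < u\<close> by simp
      then show False using nx_gt aS by fastforce
    qed
    then have "u \<in> AC \<alpha>" using aS u unfolding AC_def Ycols_def by simp
    then show "u \<in> (\<Union>\<alpha>\<in>P. AC \<alpha>)" using aS by blast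
  qed
qed

lemma sum_g: "(\<Sum>\<alpha>\<in>P. g \<alpha>) = k"
proof -
  have "k = card (\<Union>\<alpha>\<in>P. AC \<alpha>)" unfolding k_def using AC_cover by simp
  also have "\<dots> = (\<Sum>\<alpha>\<in>P. card (AC \<alpha>))"
    using finP AC_Y finYc AC_disj by (intro card_UN_disjoint) (auto intro: finite_subset)
  also have "\<dots> = (\<Sum>\<alpha>\<in>P. g \<alpha>)" using card_AC by simp
  finally show ?thesis by simp
qed

definition Mset where "Mset = {(\<beta>, u). \<beta> \<in> P \<and> u \<in> Ycols \<and> \<not> E (a \<beta>) (c u)}"
definition MA where "MA \<alpha> = {p \<in> Mset. snd p \<in> AC \<alpha>}"

lemma finM: "finite Mset"
proof -
  have "Mset \<subseteq> P \<times> Ycols" unfolding Mset_def by auto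
  then show ?thesis using finP finYc finite_subset by blast
qed

lemma card_M_rows: "card Mset = (\<Sum>\<beta>\<in>P. mis \<beta>)"
proof -
  have "Mset = Sigma P (\<lambda>\<beta>. {u \<in> Ycols. \<not> E (a \<beta>) (c u)})" unfolding Mset_def by auto
  then show ?thesis unfolding mis_def using finP finYc by (simp add: card_SigmaI)
qed

lemma card_M_arcs: "card Mset = (\<Sum>\<alpha>\<in>P. card (MA \<alpha>))"
proof -
  have "Mset = (\<Union>\<alpha>\<in>P. MA \<alpha>)" unfolding MA_def using AC_cover unfolding Mset_def by auto
  moreover have "card (\<Union>\<alpha>\<in>P. MA \<alpha>) = (\<Sum>\<alpha>\<in>P. card (MA \<alpha>))"
  proof (rule card_UN_disjoint)
    show "finite P" by (rule finP)
    show "\<forall>i\<in>P. finite (MA i)" unfolding MA_def using finM by simp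
    show "\<forall>i\<in>P. \<forall>j\<in>P. i \<noteq> j \<longrightarrow> MA i \<inter> MA j = {}" unfolding MA_def using AC_disj by blast
  qed
  ultimately show ?thesis by simp
qed


definition cross where "cross T \<longleftrightarrow> (\<exists>P0 Q0. P0 < L \<and> E x (c P0) \<and> E x (c Q0) \<and> P0 + 2 \<le> Q0 \<and>
   Q0 + 3 \<le> T \<and> T + 1 \<le> P0 + L \<and> E (a P0) (c (T - 1)) \<and> E (a Q0) (c (Suc T)))"
definition bad where "bad T \<longleftrightarrow> cross T \<and> \<not> E x (c (T - 1))"

lemma crossE:
  assumes "cross T"
  obtains P0 Q0 where "P0 < L" "E x (c P0)" "E x (c Q0)" "P0 + 2 \<le> Q0" "Q0 + 3 \<le> T" "T + 1 \<le> P0 + L"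
    "E (a P0) (c (T - 1))" "E (a Q0) (c (Suc T))"
  using assms unfolding cross_def by blast

lemma cross_X: "cross T \<Longrightarrow> c T \<in> X"
proof -
  assume "cross T"
  then obtain P0 Q0 where h: "E x (c Q0)" "E (a Q0) (c (Suc T))" by (rule crossE)
  have "even Q0" using h(1) xc_even by blast
  then have "a Q0 \<in> X" by (rule aX)
  then have "c (Suc T) \<in> Y" using h(2) nbrX by blast
  then show ?thesis using parY parX by simp
qed

lemma cross_tight: "cross T \<Longrightarrow> card (nbhd E (c T) \<inter> set C) \<le> d"
proof -
  assume "cross T"
  then obtain P0 Q0 where h: "P0 < L" "E x (c P0)" "E x (c Q0)" "P0 + 2 \<le> Q0" "Q0 + 3 \<le> T" "T + 1 \<le> P0 + L"
    "E (a P0) (c (T - 1))" "E (a Q0) (c (Suc T))" by (rule crossE)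
  show ?thesis using GCL[OF h(2-6)] h(7,8) unfolding a_def by blast
qed

lemma z_ne_x: "cross T \<Longrightarrow> z \<in> nbhd E (c T) \<Longrightarrow> z \<noteq> x"
proof -
  assume "cross T" "z \<in> nbhd E (c T)"
  then have "z \<in> Y" using cross_X nbrX unfolding nbhd_def by blast
  then show ?thesis using xX XY by blast
qed

lemma cross_disjx: "cross T \<Longrightarrow> z \<in> nbhd E (c T) - set C \<Longrightarrow> \<not> E x z"
proof
  assume cr: "cross T" and z: "z \<in> nbhd E (c T) - set C" and xz: "E x z"
  from cr obtain P0 Q0 where h: "P0 < L" "E x (c P0)" "E x (c Q0)" "P0 + 2 \<le> Q0" "Q0 + 3 \<le> T" "T + 1 \<le> P0 + L"
    "E (a P0) (c (T - 1))" "E (a Q0) (c (Suc T))" by (rule crossE)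
  show False
  proof (rule DisjX[of Q0 T z])
    show "E x (c Q0)" "Q0 + 3 \<le> T" by fact+
    show "T + 1 \<le> Q0 + L" using h by simp
    show "E (c (Suc Q0)) (c (Suc T))" using h(8) unfolding a_def .
    show "E z x" using xz symE by blast
    show "E z (c T)" using z symE unfolding nbhd_def by blast
    show "z \<notin> set C" using z by blast
  qed
qed

lemma bad_disja: "bad T \<Longrightarrow> l \<in> P \<Longrightarrow> z \<in> nbhd E (c T) - set C \<Longrightarrow> \<not> E (a l) z"
proof
  assume bd: "bad T" and lP: "l \<in> P" and z: "z \<in> nbhd E (c T) - set C" and az: "E (a l) z"
  have cr: "cross T" and nb: "\<not> E x (c (T - 1))" using bd unfolding bad_def by auto
  from cr obtain P0 Q0 where h: "P0 < L" "E x (c P0)" "E x (c Q0)" "P0 + 2 \<le> Q0" "Q0 + 3 \<le> T" "T + 1 \<le> P0 + L"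
    "E (a P0) (c (T - 1))" "E (a Q0) (c (Suc T))" by (rule crossE)
  have zx: "z \<noteq> x" using z_ne_x[OF cr] z by blast
  have zT: "E z (c T)" using z symE unfolding nbhd_def by blast
  have zC: "z \<notin> set C" using z by blast
  define Lp where "Lp = (if P0 < l then l else l + L)"
  have Lx: "E x (c Lp)" using P_x[OF lP] unfolding Lp_def by (simp add: c_per)
  have "c (Suc (l + L)) = c (Suc l)" using c_per[of "Suc l"] by simp
  then have La: "E z (c (Suc Lp))" using az symE unfolding Lp_def a_def by auto
  have Lgt: "P0 < Lp" and Lle: "Lp \<le> P0 + L" using P_lt[OF lP] h(1) unfolding Lp_def by auto
  have evL: "even Lp" using Lx xc_even by blast
  have evP: "even P0" using h(2) xc_even by blast
  have oT: "odd T" using cross_X[OF cr] parX by blast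
  show False
  proof (cases "Lp < T")
    case True
    have "Lp \<noteq> T - 1" using Lx nb by auto
    then have "Lp + 2 \<le> T" using True evL oT by (auto elim!: evenE oddE)
    moreover have "P0 + 2 \<le> Lp" using Lgt evL evP by (auto elim!: evenE)
    ultimately show False
      using DisjL[OF h(2) Lx _ _ h(6) _ zT La zC zx] h(7) unfolding a_def by blast
  next
    case False
    then have "T + 1 \<le> Lp" using evL oT by (cases "Lp = T") auto
    moreover have "Lp + 2 \<le> Q0 + L" using Lle h(4) by simp
    ultimately show False
      using DisjR[OF h(3) Lx h(5) _ _ _ zT La zC zx] h(8) unfolding a_def by blast
  qed
qed


lemma nx_g: "\<alpha> \<in> P \<Longrightarrow> nx \<alpha> = \<alpha> + 2 * g \<alpha>"
  using nx_gt[of \<alpha>] nx_even[of \<alpha>] P_even[of \<alpha>] unfolding g_def by (auto elim!: evenE)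

lemma L_even_le: "p \<in> P \<Longrightarrow> p + 2 \<le> L"
  using P_lt[of p] P_even[of p] Leven by (auto elim!: evenE)

lemma P_sep: "p \<in> P \<Longrightarrow> q \<in> P \<Longrightarrow> p < q \<Longrightarrow> p + 2 \<le> q"
  using P_even[of p] P_even[of q] by (auto elim!: evenE)

lemma classify:
  assumes aP: "\<alpha> \<in> P" and rP: "\<rho> \<in> P" and ne: "\<rho> \<noteq> \<alpha>" and j1: "\<alpha> + 3 \<le> j" and j2: "Suc j \<le> nx \<alpha>"
    and e1: "E (a \<alpha>) (c (Suc j))" and e2: "E (a \<rho>) (c (j - 1))"
  shows "bad j \<or> bad (j + L)"
proof -
  have nb: "\<not> E x (c (j - 1))" using nx_gap[OF aP, of "j - 1"] j1 j2 by simp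
  show ?thesis
  proof (cases "\<rho> < \<alpha>")
    case True
    have "cross j" unfolding cross_def
    proof (intro exI conjI)
      show "\<rho> < L" using P_lt rP by blast
      show "E x (c \<rho>)" "E x (c \<alpha>)" using P_x rP aP by blast+
      show "\<rho> + 2 \<le> \<alpha>" using P_sep[OF rP aP True] .
      show "\<alpha> + 3 \<le> j" by fact
      show "j + 1 \<le> \<rho> + L" using j2 nx_le[OF aP] by simp
      show "E (a \<rho>) (c (j - 1))" "E (a \<alpha>) (c (Suc j))" by fact+
    qed
    then show ?thesis using nb unfolding bad_def by blast
  next
    case False
    then have "\<alpha> < \<rho>" using ne by simp
    then have nr: "nx \<alpha> \<le> \<rho>" using nx_min aP rP by blast
    have "cross (j + L)" unfolding cross_def
    proof (intro exI conjI)
      show "\<rho> < L" using P_lt rP by blast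
      show "E x (c \<rho>)" using P_x rP by blast
      show "E x (c (\<alpha> + L))" using P_x aP by (simp add: c_per)
      show "\<rho> + 2 \<le> \<alpha> + L" using L_even_le[OF rP] by simp
      show "\<alpha> + L + 3 \<le> j + L" using j1 by simp
      show "j + L + 1 \<le> \<rho> + L" using j2 nr by simp
      have "c (j + L - 1) = c (j - 1)" using j1 c_per[of "j - 1"] by (simp add: add.commute)
      then show "E (a \<rho>) (c (j + L - 1))" using e2 by simp
      have "a (\<alpha> + L) = a \<alpha>" unfolding a_def using c_per[of "Suc \<alpha>"] by simp
      moreover have "c (Suc (j + L)) = c (Suc j)" using c_per[of "Suc j"] by simp
      ultimately show "E (a (\<alpha> + L)) (c (Suc (j + L)))" using e1 by simp
    qed
    moreover have "\<not> E x (c (j + L - 1))"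
    proof -
      have "c (j + L - 1) = c (j - 1)" using j1 c_per[of "j - 1"] by (simp add: add.commute)
      then show ?thesis using nb by simp
    qed
    ultimately show ?thesis unfolding bad_def by blast
  qed
qed

definition nobad where "nobad \<longleftrightarrow> (\<forall>T. \<not> bad T)"
definition jj where "jj \<alpha> s = \<alpha> + 2 * s + 1"
definition FF where "FF \<rho> \<alpha> s = (if \<not> E (a \<alpha>) (c (Suc (jj \<alpha> s))) then (\<alpha>, Suc (jj \<alpha> s)) else (\<rho>, jj \<alpha> s - 1))"

lemma jj_props: "\<alpha> \<in> P \<Longrightarrow> 1 \<le> s \<Longrightarrow> s < g \<alpha> \<Longrightarrow> \<alpha> + 3 \<le> jj \<alpha> s \<and> Suc (jj \<alpha> s) \<le> nx \<alpha>"
  using nx_g[of \<alpha>] unfolding jj_def by simp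

lemma inMA: "\<alpha> \<in> P \<Longrightarrow> \<beta> \<in> P \<Longrightarrow> \<alpha> < u \<Longrightarrow> u \<le> nx \<alpha> \<Longrightarrow> even u \<Longrightarrow> \<not> E (a \<beta>) (c u) \<Longrightarrow> (\<beta>, u) \<in> MA \<alpha>"
  unfolding MA_def Mset_def AC_def Ycols_def using nx_le[of \<alpha>] by auto

lemma FF_in:
  assumes aP: "\<alpha> \<in> P" and rP: "\<rho> \<in> P" and ne: "\<rho> \<noteq> \<alpha>" and nob: nobad and s: "1 \<le> s" "s < g \<alpha>"
  shows "FF \<rho> \<alpha> s \<in> MA \<alpha>"
proof -
  have j: "\<alpha> + 3 \<le> jj \<alpha> s" "Suc (jj \<alpha> s) \<le> nx \<alpha>" using jj_props[OF aP s] by auto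
  have ev: "even (Suc (jj \<alpha> s))" "even (jj \<alpha> s - 1)" using P_even[OF aP] unfolding jj_def by auto
  show ?thesis
  proof (cases "E (a \<alpha>) (c (Suc (jj \<alpha> s)))")
    case True
    have "\<not> E (a \<rho>) (c (jj \<alpha> s - 1))" using classify[OF aP rP ne j True] nob unfolding nobad_def by blast
    then show ?thesis unfolding FF_def using True inMA[OF aP rP _ _ ev(2)] j by simp
  next
    case False
    then show ?thesis unfolding FF_def using inMA[OF aP aP _ _ ev(1)] j by simp
  qed
qed

lemma FF_inj: "\<rho> \<noteq> \<alpha> \<Longrightarrow> inj_on (FF \<rho> \<alpha>) {1..<g \<alpha>}"
  unfolding inj_on_def FF_def jj_def by (auto split: if_splits)

lemma PA1:
  assumes aP: "\<alpha> \<in> P" and d2: "2 \<le> d" and nob: nobad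
  shows "g \<alpha> - 1 \<le> card (MA \<alpha>)"
proof -
  obtain \<rho> where rP: "\<rho> \<in> P" and ne: "\<rho> \<noteq> \<alpha>"
  proof -
    have "P \<noteq> {\<alpha>}" using d2 card_P by auto
    then show ?thesis using that aP by blast
  qed
  have "FF \<rho> \<alpha> ` {1..<g \<alpha>} \<subseteq> MA \<alpha>" using FF_in[OF aP rP ne nob] by auto
  then have "card (FF \<rho> \<alpha> ` {1..<g \<alpha>}) \<le> card (MA \<alpha>)"
    using finM unfolding MA_def by (intro card_mono) auto
  moreover have "card (FF \<rho> \<alpha> ` {1..<g \<alpha>}) = g \<alpha> - 1" using FF_inj[OF ne] by (simp add: card_image)
  ultimately show ?thesis by simp
qed


lemma third: "3 \<le> d \<Longrightarrow> \<exists>r\<in>P. r \<noteq> u \<and> r \<noteq> v"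
proof (rule ccontr)
  assume d3: "3 \<le> d" and "\<not> (\<exists>r\<in>P. r \<noteq> u \<and> r \<noteq> v)"
  then have "P \<subseteq> {u, v}" by blast
  then have "card P \<le> card {u, v}" by (intro card_mono) auto
  also have "\<dots> \<le> 2" by (simp add: card_insert_le_m1)
  finally show False using d3 card_P by simp
qed

lemma PA2:
  assumes aP: "\<alpha> \<in> P" and d3: "3 \<le> d" and nob: nobad and g2: "2 \<le> g \<alpha>"
  shows "g \<alpha> \<le> card (MA \<alpha>)"
proof -
  obtain \<rho> where rP: "\<rho> \<in> P" and ne: "\<rho> \<noteq> \<alpha>" using third[OF d3, of \<alpha> \<alpha>] by blast
  let ?S = "FF \<rho> \<alpha> ` {1..<g \<alpha>}"
  have Ssub: "?S \<subseteq> MA \<alpha>" using FF_in[OF aP rP ne nob] by auto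
  have cS: "card ?S = g \<alpha> - 1" using FF_inj[OF ne] by (simp add: card_image)
  have finMA: "finite (MA \<alpha>)" using finM unfolding MA_def by simp
  have nxg: "nx \<alpha> = \<alpha> + 2 * g \<alpha>" using nx_g[OF aP] .
  obtain e where eM: "e \<in> MA \<alpha>" and eS: "e \<notin> ?S"
  proof (cases "\<exists>s\<in>{1..<g \<alpha>}. E (a \<alpha>) (c (Suc (jj \<alpha> s)))")
    case True
    then obtain s where s: "1 \<le> s" "s < g \<alpha>" and es: "E (a \<alpha>) (c (Suc (jj \<alpha> s)))" by auto
    obtain r where rP2: "r \<in> P" "r \<noteq> \<alpha>" "r \<noteq> \<rho>" using third[OF d3, of \<alpha> \<rho>] by blast
    have j: "\<alpha> + 3 \<le> jj \<alpha> s" "Suc (jj \<alpha> s) \<le> nx \<alpha>" using jj_props[OF aP s] by auto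
    have "\<not> E (a r) (c (jj \<alpha> s - 1))" using classify[OF aP rP2(1,2) j es] nob unfolding nobad_def by blast
    moreover have "even (jj \<alpha> s - 1)" using P_even[OF aP] unfolding jj_def by auto
    ultimately have "(r, jj \<alpha> s - 1) \<in> MA \<alpha>" using inMA[OF aP rP2(1)] j by simp
    moreover have "(r, jj \<alpha> s - 1) \<notin> ?S" using rP2 unfolding FF_def by (auto split: if_splits)
    ultimately show ?thesis using that by blast
  next
    case False
    then have allc1: "\<And>s. 1 \<le> s \<Longrightarrow> s < g \<alpha> \<Longrightarrow> \<not> E (a \<alpha>) (c (Suc (jj \<alpha> s)))" by auto
    have Srow: "\<And>p. p \<in> ?S \<Longrightarrow> fst p = \<alpha>" using allc1 unfolding FF_def by auto
    have "Suc (jj \<alpha> (g \<alpha> - 1)) = nx \<alpha>" using nxg g2 unfolding jj_def by simp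
    then have na: "\<not> E (a \<alpha>) (c (nx \<alpha>))" using allc1[of "g \<alpha> - 1"] g2 by simp
    define b where "b = (if nx \<alpha> < L then nx \<alpha> else 0)"
    have bP: "b \<in> P" unfolding b_def using nx_P[OF aP] P0 by simp
    have bne: "b \<noteq> \<alpha>"
    proof
      assume "b = \<alpha>"
      show False
      proof (cases "nx \<alpha> < L")
        case True then show False using \<open>b = \<alpha>\<close> nx_gt[OF aP] unfolding b_def by simp
      next
        case False
        then have "nx \<alpha> = L" using nx_le[OF aP] by simp
        then have "\<And>\<beta>. \<beta> \<in> P \<Longrightarrow> \<beta> \<le> 0" using nx_L[OF aP] \<open>b = \<alpha>\<close> False unfolding b_def by simp
        then have "P \<subseteq> {0}" by auto
        then have "card P \<le> 1" using card_mono[of "{0::nat}" P] by simp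
        then show False using d3 card_P by simp
      qed
    qed
    have cb: "c b = c (nx \<alpha>)" unfolding b_def using nx_le[OF aP] cL0 by auto
    have nxm2: "\<alpha> < nx \<alpha> - 2" "even (nx \<alpha> - 2)" using nxg g2 P_even[OF aP] by auto
    show ?thesis
    proof (cases "E (a b) (c (nx \<alpha> - 2))")
      case False
      then have "(b, nx \<alpha> - 2) \<in> MA \<alpha>" using inMA[OF aP bP nxm2(1) _ nxm2(2)] by simp
      moreover have "(b, nx \<alpha> - 2) \<notin> ?S" using Srow bne by force
      ultimately show ?thesis using that by blast
    next
      case eb: True
      show ?thesis
      proof (cases "\<exists>q\<in>P. q \<noteq> b \<and> E (a q) (c (nx \<alpha>))")
        case False
        obtain r where rP2: "r \<in> P" "r \<noteq> \<alpha>" "r \<noteq> b" using third[OF d3, of \<alpha> b] by blast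
        then have "\<not> E (a r) (c (nx \<alpha>))" using False by blast
        then have "(r, nx \<alpha>) \<in> MA \<alpha>" using inMA[OF aP rP2(1) nx_gt[OF aP] _ nx_even[OF aP]] by simp
        moreover have "(r, nx \<alpha>) \<notin> ?S" using Srow rP2 by force
        ultimately show ?thesis using that by blast
      next
        case True
        then obtain q where qP: "q \<in> P" and qb: "q \<noteq> b" and eq: "E (a q) (c (nx \<alpha>))" by blast
        have qa: "q \<noteq> \<alpha>" using eq na by blast
        define Q0 where "Q0 = (if b < q then q else q + L)"
        have c1: "c (b + L - 1 - 1) = c (nx \<alpha> - 2)"
        proof (cases "nx \<alpha> < L")
          case True
          then have "b + L - 1 - 1 = (nx \<alpha> - 2) + L" using nxm2 unfolding b_def by simp
          then show ?thesis by (simp add: c_per)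
        next
          case False
          then have "nx \<alpha> = L" using nx_le[OF aP] by simp
          moreover have "b + L - 1 - 1 = L - 2" unfolding b_def using False by simp
          ultimately show ?thesis by simp
        qed
        have c2: "c (Suc (b + L - 1)) = c (nx \<alpha>)"
        proof -
          have "Suc (b + L - 1) = b + L" using L3 by simp
          then show ?thesis using c_per[of b] cb by simp
        qed
        have aQ: "a Q0 = a q" unfolding Q0_def a_def using c_per[of "Suc q"] by simp
        have Q3: "Q0 + 3 \<le> b + L - 1"
        proof (cases "nx \<alpha> < L")
          case True
          then have bb: "b = nx \<alpha>" unfolding b_def by simp
          show ?thesis
          proof (cases "b < q")
            case True then show ?thesis using bb L_even_le[OF qP] nxm2 unfolding Q0_def by simp
          next
            case False
            then have "q < nx \<alpha>" using qb bb by simp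
            then have "q < \<alpha>" using nx_gapP[OF aP, of q] qP qa by (cases "\<alpha> < q") auto
            then have "q + 2 \<le> \<alpha>" using P_sep[OF qP aP] by simp
            then show ?thesis using False bb nxg g2 unfolding Q0_def by simp
          qed
        next
          case False
          then have nL: "nx \<alpha> = L" and b0: "b = 0" using nx_le[OF aP] unfolding b_def by auto
          then have "q \<le> \<alpha>" using nx_L[OF aP nL qP] by simp
          then have "q + 2 \<le> \<alpha>" using P_sep[OF qP aP] qa by simp
          moreover have "0 < q" using qb b0 by simp
          ultimately show ?thesis using b0 nL nxg g2 unfolding Q0_def by simp
        qed
        have "cross (b + L - 1)" unfolding cross_def
        proof (intro exI conjI)
          show "b < L" using P_lt[OF bP] .
          show "E x (c b)" using P_x[OF bP] .
          show "E x (c Q0)" using P_x[OF qP] unfolding Q0_def by (simp add: c_per)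
          show "b + 2 \<le> Q0" using P_sep[OF bP qP] L_even_le[OF bP] unfolding Q0_def by auto
          show "Q0 + 3 \<le> b + L - 1" by (rule Q3)
          show "b + L - 1 + 1 \<le> b + L" using L3 by simp
          show "E (a b) (c (b + L - 1 - 1))" using eb c1 by simp
          show "E (a Q0) (c (Suc (b + L - 1)))" using eq aQ c2 by simp
        qed
        moreover have "\<not> E x (c (b + L - 1 - 1))" using c1 nx_gap[OF aP nxm2(1)] nxm2(1) by simp
        ultimately have "bad (b + L - 1)" unfolding bad_def by blast
        then show ?thesis using nob unfolding nobad_def by blast
      qed
    qed
  qed
  have "card (insert e ?S) = g \<alpha>" using cS eS g2 by (simp add: card_insert_if)
  moreover have "card (insert e ?S) \<le> card (MA \<alpha>)" using Ssub eM finMA by (intro card_mono) auto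
  ultimately show ?thesis by simp
qed


lemma mis_le: "mis \<alpha> \<le> k" unfolding mis_def k_def using finYc by (intro card_mono) auto

lemma mis_M: "\<alpha> \<in> P \<Longrightarrow> mis \<alpha> \<le> card Mset"
  unfolding card_M_rows using finP by (intro member_le_sum) auto

lemma G1row: "\<alpha> \<in> P \<Longrightarrow> g \<alpha> = 1 \<Longrightarrow> k - d \<le> mis \<alpha>"
proof -
  assume aP: "\<alpha> \<in> P" and g1: "g \<alpha> = 1"
  have "nx \<alpha> = \<alpha> + 2" using nx_g[OF aP] g1 by simp
  then have "E x (c (\<alpha> + 2))" using nx_x[OF aP] by simp
  then have "card (nbhd E (c (Suc \<alpha>)) \<inter> set C) \<le> d" using G1[OF P_x[OF aP]] by blast
  then have "k - mis \<alpha> \<le> d" using card_nbhd_a[OF P_even[OF aP]] unfolding a_def by simp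
  then show ?thesis using mis_le[of \<alpha>] by simp
qed

lemma Ssep: "3 \<le> d \<Longrightarrow> d < k \<Longrightarrow> d - 2 \<le> card Mset \<or> k - d \<le> mis 0"
proof -
  assume d3: "3 \<le> d" and dk: "d < k"
  have L8: "4 \<le> L" using dk d3 k_val by simp
  show ?thesis
  proof (cases "\<exists>p\<in>P. \<exists>q\<in>P. 0 < p \<and> p < q \<and> E (a p) (c 0) \<and> E (a q) (c 2)")
    case True
    then obtain p q where pq: "p \<in> P" "q \<in> P" "0 < p" "p < q" "E (a p) (c 0)" "E (a q) (c 2)" by blast
    have "card (nbhd E (c (L + 1)) \<inter> set C) \<le> d"
    proof (rule GCL[of p q])
      show "E x (c p)" "E x (c q)" using P_x pq by auto
      show "p + 2 \<le> q" using P_sep pq by auto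
      show "q + 3 \<le> L + 1" using L_even_le[OF pq(2)] by simp
      show "L + 1 + 1 \<le> p + L" using P_sep[OF P0 pq(1) pq(3)] by simp
      show "E (c (Suc p)) (c (L + 1 - 1))" using pq(5) cL0 unfolding a_def by simp
      have "c (Suc (L + 1)) = c 2" using c_per2[of 2] by simp
      then show "E (c (Suc q)) (c (Suc (L + 1)))" using pq(6) unfolding a_def by simp
    qed
    moreover have "c (L + 1) = a 0" unfolding a_def using c_per2[of 1] by simp
    ultimately have "k - mis 0 \<le> d" using card_nbhd_a[of 0] by simp
    then have "k - d \<le> mis 0" using mis_le[of 0] by linarith
    then show ?thesis by blast
  next
    case False
    let ?S = "P - {0}"
    let ?A = "{p \<in> ?S. E (a p) (c 0)}"
    let ?B = "{q \<in> ?S. E (a q) (c 2)}"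
    have sepAB: "\<And>p q. p \<in> ?A \<Longrightarrow> q \<in> ?B \<Longrightarrow> q \<le> p" using False by fastforce
    have finS: "finite ?S" using finP by simp
    have cAB: "card ?A + card ?B \<le> card ?S + 1" by (rule sep_card[OF finS _ _ sepAB]) auto
    have cS: "card ?S = d - 1" using card_P P0 finP by simp
    let ?M1 = "(\<lambda>p. (p, L)) ` (?S - ?A)"
    let ?M2 = "(\<lambda>q. (q, 2::nat)) ` (?S - ?B)"
    have sub: "?M1 \<union> ?M2 \<subseteq> Mset" unfolding Mset_def Ycols_def using cL0 L8 Leven by auto
    have dis: "?M1 \<inter> ?M2 = {}" using L8 by auto
    have dA: "card (?S - ?A) = card ?S - card ?A" using finS by (intro card_Diff_subset) (auto intro: finite_subset)
    have dB: "card (?S - ?B) = card ?S - card ?B" using finS by (intro card_Diff_subset) (auto intro: finite_subset)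
    have c1: "card ?M1 = card ?S - card ?A" unfolding dA[symmetric] by (rule card_image) (auto simp: inj_on_def)
    have c2: "card ?M2 = card ?S - card ?B" unfolding dB[symmetric] by (rule card_image) (auto simp: inj_on_def)
    have "card (?M1 \<union> ?M2) = card ?M1 + card ?M2" using dis finS by (intro card_Un_disjoint) auto
    moreover have "card (?M1 \<union> ?M2) \<le> card Mset" using card_mono[OF finM sub] .
    moreover have "card ?A \<le> card ?S" "card ?B \<le> card ?S" using finS by (auto intro: card_mono)
    ultimately have "d - 2 \<le> card Mset" using c1 c2 cS cAB by linarith
    then show ?thesis by simp
  qed
qed



lemma nbhd_Y: "v \<in> X \<Longrightarrow> nbhd E v \<subseteq> Y" unfolding nbhd_def using nbrX by blast

lemma union_count:
  assumes W1: "W \<subseteq> Y - set C" and W2: "W \<inter> (nbhd E x - set C) = {}"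
    and W3: "\<And>\<alpha>. \<alpha> \<in> P \<Longrightarrow> W \<inter> (nbhd E (a \<alpha>) - set C) = {}"
  shows "k + card (nbhd E x - set C) + (\<Sum>\<alpha>\<in>P. card (nbhd E (a \<alpha>) - set C)) + card W \<le> card Y"
proof -
  let ?A0 = "Y \<inter> set C"
  let ?A1 = "nbhd E x - set C"
  let ?B = "\<lambda>\<alpha>. nbhd E (a \<alpha>) - set C"
  let ?A2 = "\<Union>\<alpha>\<in>P. ?B \<alpha>"
  have aXP: "\<And>\<alpha>. \<alpha> \<in> P \<Longrightarrow> a \<alpha> \<in> X" using aX P_even by blast
  have finB: "\<And>\<alpha>. finite (?B \<alpha>)" using finN by simp
  have disjB: "\<And>\<alpha> \<beta>. \<alpha> \<in> P \<Longrightarrow> \<beta> \<in> P \<Longrightarrow> \<alpha> < \<beta> \<Longrightarrow> ?B \<alpha> \<inter> ?B \<beta> = {}"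
  proof (rule ccontr)
    fix \<alpha> \<beta> assume h: "\<alpha> \<in> P" "\<beta> \<in> P" "\<alpha> < \<beta>" "?B \<alpha> \<inter> ?B \<beta> \<noteq> {}"
    then obtain z where z: "z \<in> ?B \<alpha>" "z \<in> ?B \<beta>" by blast
    have zY: "z \<in> Y" using z(1) nbhd_Y[OF aXP[OF h(1)]] by blast
    show False
    proof (rule F1b[of \<alpha> \<beta> z])
      show "E x (c \<alpha>)" "E x (c \<beta>)" using P_x h by auto
      show "\<alpha> < \<beta>" by fact
      show "\<beta> < \<alpha> + L" using P_lt[OF h(2)] by simp
      show "E z (c (Suc \<alpha>))" "E z (c (Suc \<beta>))" using z symE unfolding nbhd_def a_def by auto
      show "z \<notin> set C" using z by blast
      show "z \<noteq> x" using zY xX XY by blast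
    qed
  qed
  have disjB': "\<forall>\<alpha>\<in>P. \<forall>\<beta>\<in>P. \<alpha> \<noteq> \<beta> \<longrightarrow> ?B \<alpha> \<inter> ?B \<beta> = {}"
    using disjB by (metis Int_commute linorder_neqE_nat)
  have cA2: "card ?A2 = (\<Sum>\<alpha>\<in>P. card (?B \<alpha>))"
    using finP finB disjB' by (intro card_UN_disjoint) auto
  have d12: "?A1 \<inter> ?A2 = {}"
  proof (rule ccontr)
    assume "?A1 \<inter> ?A2 \<noteq> {}"
    then obtain z \<alpha> where z: "z \<in> ?A1" "\<alpha> \<in> P" "z \<in> ?B \<alpha>" by blast
    show False
    proof (rule F1a[of \<alpha> z])
      show "E x (c \<alpha>)" using P_x z(2) by blast
      show "E z x" "E z (c (Suc \<alpha>))" using z symE unfolding nbhd_def a_def by auto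
      show "z \<notin> set C" using z by blast
    qed
  qed
  have sub: "?A0 \<union> ?A1 \<union> ?A2 \<union> W \<subseteq> Y" using nbhd_Y[OF xX] nbhd_Y[OF aXP] W1 by blast
  have fins: "finite ?A0" "finite ?A1" "finite ?A2" "finite W"
    using finY finN finP finB W1 by (auto intro: finite_subset)
  have "card (?A0 \<union> ?A1 \<union> ?A2 \<union> W) = card ?A0 + card ?A1 + card ?A2 + card W"
  proof -
    have "card (?A0 \<union> ?A1 \<union> ?A2 \<union> W) = card (?A0 \<union> ?A1 \<union> ?A2) + card W"
      using fins W1 W2 W3 by (intro card_Un_disjoint) auto
    moreover have "card (?A0 \<union> ?A1 \<union> ?A2) = card (?A0 \<union> ?A1) + card ?A2"
      using fins d12 by (intro card_Un_disjoint) auto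
    moreover have "card (?A0 \<union> ?A1) = card ?A0 + card ?A1"
      using fins by (intro card_Un_disjoint) auto
    ultimately show ?thesis by simp
  qed
  moreover have "card (?A0 \<union> ?A1 \<union> ?A2 \<union> W) \<le> card Y" using card_mono[OF finY sub] .
  ultimately show ?thesis using card_YC cA2 by simp
qed

lemma deg_off: "v \<in> X \<Longrightarrow> card (nbhd E v) - card (nbhd E v \<inter> set C) = card (nbhd E v - set C)"
  using finN by (simp add: card_Diff_subset_Int)

lemma M_nobad: "2 \<le> d \<Longrightarrow> nobad \<Longrightarrow> k - d \<le> card Mset"
proof -
  assume d2: "2 \<le> d" and nob: nobad
  have "(\<Sum>\<alpha>\<in>P. g \<alpha> - 1) \<le> (\<Sum>\<alpha>\<in>P. card (MA \<alpha>))" using PA1[OF _ d2 nob] by (rule sum_mono)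
  moreover have "(\<Sum>\<alpha>\<in>P. g \<alpha> - 1) = k - d"
  proof -
    have "(\<Sum>\<alpha>\<in>P. g \<alpha> - 1) + (\<Sum>\<alpha>\<in>P. 1) = (\<Sum>\<alpha>\<in>P. g \<alpha>)"
      unfolding sum.distrib[symmetric] using g_pos by (intro sum.cong) (auto simp: Suc_le_eq)
    then show ?thesis using sum_g card_P by simp
  qed
  ultimately show ?thesis using card_M_arcs by simp
qed

definition H where "H = {\<alpha> \<in> P. g \<alpha> = 1}"

lemma M_H: "d \<le> k \<Longrightarrow> card H * (k - d) \<le> card Mset"
proof -
  assume "d \<le> k"
  have "card H * (k - d) = (\<Sum>\<alpha>\<in>H. k - d)" by simp
  also have "\<dots> \<le> (\<Sum>\<alpha>\<in>H. mis \<alpha>)" using G1row unfolding H_def by (intro sum_mono) auto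
  also have "\<dots> \<le> (\<Sum>\<alpha>\<in>P. mis \<alpha>)" using finP unfolding H_def by (intro sum_mono2) auto
  finally show ?thesis using card_M_rows by simp
qed

lemma e_H: "d - card H \<le> k - d"
proof -
  have fH: "finite H" "H \<subseteq> P" using finP unfolding H_def by auto
  have "(\<Sum>\<alpha>\<in>P - H. 1::nat) \<le> (\<Sum>\<alpha>\<in>P - H. g \<alpha> - 1)"
    using g_pos unfolding H_def by (intro sum_mono) fastforce
  also have "\<dots> \<le> (\<Sum>\<alpha>\<in>P. g \<alpha> - 1)" using finP by (intro sum_mono2) auto
  also have "(\<Sum>\<alpha>\<in>P. g \<alpha> - 1) = k - d"
  proof -
    have "(\<Sum>\<alpha>\<in>P. g \<alpha> - 1) + (\<Sum>\<alpha>\<in>P. 1) = (\<Sum>\<alpha>\<in>P. g \<alpha>)"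
      unfolding sum.distrib[symmetric] using g_pos by (intro sum.cong) (auto simp: Suc_le_eq)
    then show ?thesis using sum_g card_P by simp
  qed
  finally have "card (P - H) \<le> k - d" by simp
  moreover have "card (P - H) = d - card H" using fH card_P by (simp add: card_Diff_subset)
  ultimately show ?thesis by simp
qed

lemma M_nobad3: "3 \<le> d \<Longrightarrow> nobad \<Longrightarrow> k - card H \<le> card Mset"
proof -
  assume d3: "3 \<le> d" and nob: nobad
  have d2: "2 \<le> d" using d3 by simp
  let ?f = "\<lambda>\<alpha>. if g \<alpha> = 1 then 0 else g \<alpha>"
  have "(\<Sum>\<alpha>\<in>P. ?f \<alpha>) \<le> (\<Sum>\<alpha>\<in>P. card (MA \<alpha>))"
  proof (rule sum_mono)
    fix \<alpha> assume aP: "\<alpha> \<in> P"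
    show "?f \<alpha> \<le> card (MA \<alpha>)"
    proof (cases "g \<alpha> = 1")
      case False
      then have "2 \<le> g \<alpha>" using g_pos[OF aP] by simp
      then show ?thesis using PA2[OF aP d3 nob] False by simp
    qed simp
  qed
  moreover have "(\<Sum>\<alpha>\<in>P. ?f \<alpha>) + card H = k"
  proof -
    have "(\<Sum>\<alpha>\<in>P. ?f \<alpha>) + (\<Sum>\<alpha>\<in>P. if g \<alpha> = 1 then 1 else 0) = (\<Sum>\<alpha>\<in>P. g \<alpha>)"
      unfolding sum.distrib[symmetric] by (intro sum.cong) auto
    moreover have "(\<Sum>\<alpha>\<in>P. if g \<alpha> = 1 then 1 else 0::nat) = card H"
      unfolding H_def using sum.inter_filter[OF finP, of "\<lambda>_. 1::nat" "\<lambda>\<alpha>. g \<alpha> = 1"] by simp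
    ultimately show ?thesis using sum_g by simp
  qed
  ultimately show ?thesis using card_M_arcs by simp
qed



theorem main:
  assumes d2: "2 \<le> d" and dk: "d < k" and kd: "k < \<delta>"
  shows "3 * int \<delta> - 4 \<le> int (card Y)"
proof -
  let ?M = "card Mset"
  have aXP: "\<And>\<alpha>. \<alpha> \<in> P \<Longrightarrow> a \<alpha> \<in> X" using aX P_even by blast
  have each: "\<delta> - k + mis \<alpha> \<le> card (nbhd E (a \<alpha>) - set C)" if aP: "\<alpha> \<in> P" for \<alpha>
  proof -
    have "card (nbhd E (a \<alpha>) - set C) = card (nbhd E (a \<alpha>)) - (k - mis \<alpha>)"
      using deg_off[OF aXP[OF aP]] card_nbhd_a[OF P_even[OF aP]] by simp
    moreover have "\<delta> \<le> card (nbhd E (a \<alpha>))" using deg aXP[OF aP] by blast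
    ultimately show ?thesis using mis_le[of \<alpha>] kd by linarith
  qed
  have sumA: "d * (\<delta> - k) + ?M \<le> (\<Sum>\<alpha>\<in>P. card (nbhd E (a \<alpha>) - set C))"
  proof -
    have "(\<Sum>\<alpha>\<in>P. \<delta> - k + mis \<alpha>) \<le> (\<Sum>\<alpha>\<in>P. card (nbhd E (a \<alpha>) - set C))" using each by (rule sum_mono)
    moreover have "(\<Sum>\<alpha>\<in>P. \<delta> - k + mis \<alpha>) = d * (\<delta> - k) + ?M"
      using card_P card_M_rows by (simp add: sum.distrib)
    ultimately show ?thesis by simp
  qed
  have xo: "\<delta> - d \<le> card (nbhd E x - set C)"
    using deg_off[OF xX] deg[OF xX] unfolding d_def by linarith
  define P1 where "P1 = int d * (int \<delta> - int k)"
  have P1n: "int (d * (\<delta> - k)) = P1" unfolding P1_def using kd by (simp add: of_nat_diff)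
  define B where "B = (if nobad then 0 else int \<delta> - int d)"
  have Bn: "nobad \<Longrightarrow> B = 0" and Bb: "\<not> nobad \<Longrightarrow> B = int \<delta> - int d" unfolding B_def by auto
  define S where "S = (\<Sum>\<alpha>\<in>P. card (nbhd E (a \<alpha>) - set C))"
  define cx where "cx = card (nbhd E x - set C)"
  define D where "D = d * (\<delta> - k)"
  have sumA': "int D + int ?M \<le> int S" using sumA unfolding S_def D_def by linarith
  have xo': "int \<delta> - int d \<le> int cx" using xo dk kd unfolding cx_def by linarith
  have DP: "int D = P1" using P1n unfolding D_def .
  have Y1: "int k + (int \<delta> - int d) + P1 + int ?M + B \<le> int (card Y)"
  proof (cases nobad)
    case True
    have "k + cx + S + card ({}::'a set) \<le> card Y" unfolding cx_def S_def
      by (rule union_count) auto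
    then have "int k + int cx + int S \<le> int (card Y)" by linarith
    then show ?thesis using sumA' xo' DP True unfolding B_def by simp
  next
    case False
    then obtain T where bT: "bad T" unfolding nobad_def by blast
    then have cr: "cross T" unfolding bad_def by blast
    let ?W = "nbhd E (c T) - set C"
    have "k + cx + S + card ?W \<le> card Y" unfolding cx_def S_def
    proof (rule union_count)
      show "?W \<subseteq> Y - set C" using nbhd_Y[OF cross_X[OF cr]] by blast
      show "?W \<inter> (nbhd E x - set C) = {}" using cross_disjx[OF cr] unfolding nbhd_def by blast
      show "?W \<inter> (nbhd E (a \<alpha>) - set C) = {}" if "\<alpha> \<in> P" for \<alpha>
        using bad_disja[OF bT that] unfolding nbhd_def by blast
    qed
    then have "int k + int cx + int S + int (card ?W) \<le> int (card Y)" by linarith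
    moreover have "\<delta> - d \<le> card ?W"
      using deg_off[OF cross_X[OF cr]] deg[OF cross_X[OF cr]] cross_tight[OF cr] by linarith
    then have "int \<delta> - int d \<le> int (card ?W)" using dk kd by linarith
    ultimately show ?thesis using sumA' xo' DP False unfolding B_def by simp
  qed
  show ?thesis
  proof (cases "\<delta> = k + 1 \<and> 3 \<le> d")
    case False
    then have cs: "k + 2 \<le> \<delta> \<or> d = 2" using kd d2 by linarith
    show ?thesis
    proof (cases nobad)
      case True
      have M: "k - d \<le> ?M" using M_nobad[OF d2 True] .
      define Q where "Q = (int d - 2) * (int \<delta> - int k - 2)"
      have "0 \<le> Q" unfolding Q_def using cs d2 by (auto intro: mult_nonneg_nonneg)
      moreover have "Q = P1 - 2 * int d - 2 * (int \<delta> - int k) + 4"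
        unfolding Q_def P1_def by (simp add: algebra_simps)
      moreover have M': "int k - int d \<le> int ?M" using M dk by linarith
      ultimately show ?thesis using Y1 Bn[OF True] by (smt (verit))
    next
      case nb: False
      define Q where "Q = (int d - 1) * (int \<delta> - int k - 2)"
      have "0 \<le> Q + 1 \<or> d = 2" unfolding Q_def using cs d2 by (auto intro: mult_nonneg_nonneg)
      moreover have "Q = P1 - 2 * int d - (int \<delta> - int k) + 2"
        unfolding Q_def P1_def by (simp add: algebra_simps)
      moreover have "d = 2 \<Longrightarrow> P1 = 2 * (int \<delta> - int k)" unfolding P1_def by simp
      moreover have "0 \<le> int ?M" "int k < int \<delta>" "d = 2 \<Longrightarrow> int d = 2" using kd by auto
      ultimately show ?thesis using Y1 Bb[OF nb] by (smt (verit))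
    qed
  next
    case True
    then have r1: "\<delta> = k + 1" and d3: "3 \<le> d" by auto
    have P1d: "P1 = int d" unfolding P1_def using r1 by simp
    have r1': "int \<delta> = int k + 1" using r1 by simp
    have Mneed: "k - 2 \<le> ?M \<or> (\<not> nobad \<and> d - 3 \<le> ?M)"
    proof (cases "2 \<le> card H")
      case True
      have MH: "card H * (k - d) \<le> ?M" using M_H dk by simp
      have eH: "d - card H \<le> k - d" by (rule e_H)
      have "k - 2 \<le> card H * (k - d)"
      proof (cases "d \<le> k - d + 2")
        case True
        have "2 * (k - d) \<le> card H * (k - d)" using \<open>2 \<le> card H\<close> by (rule mult_right_mono) simp
        then show ?thesis using True dk by linarith
      next
        case False
        then have h: "d - (k - d) \<le> card H" using eH by linarith
        have "(d - (k - d)) * (k - d) \<le> card H * (k - d)" using h by (rule mult_right_mono) simp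
        moreover have "k - 2 \<le> (d - (k - d)) * (k - d)"
        proof -
          define e where "e = k - d"
          have e1: "1 \<le> e" and e2: "e + 2 < d" using dk False unfolding e_def by auto
          have "0 \<le> (int e - 1) * (int d - int e - 2)" using e1 e2 by (intro mult_nonneg_nonneg) auto
          then have A: "int k - 2 \<le> (int d - int e) * int e" using dk unfolding e_def by (simp add: algebra_simps of_nat_diff)
          have B: "int ((d - e) * e) = (int d - int e) * int e"
          proof -
            have "int (d - e) = int d - int e" using e2 by simp
            then show ?thesis by (simp only: of_nat_mult)
          qed
          have "int k - 2 \<le> int ((d - e) * e)" by (subst B) (rule A)
          then show ?thesis unfolding e_def by linarith
        qed
        ultimately show ?thesis by linarith
      qed
      then show ?thesis using MH by simp
    next
      case False
      then have hl: "card H \<le> 1" by simp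
      have eH: "d - card H \<le> k - d" by (rule e_H)
      show ?thesis
      proof (cases nobad)
        case True
        then show ?thesis using M_nobad3[OF d3 True] hl by linarith
      next
        case nb: False
        have "d - 2 \<le> ?M \<or> k - d \<le> mis 0" using Ssep[OF d3 dk] .
        moreover have "mis 0 \<le> ?M" using mis_M[OF P0] .
        ultimately have "d - 3 \<le> ?M" using eH hl by linarith
        then show ?thesis using nb by blast
      qed
    qed
    show ?thesis
    proof (cases nobad)
      case True
      then have "k - 2 \<le> ?M" using Mneed by blast
      then have "int k - 2 \<le> int ?M" using dk d3 by linarith
      then show ?thesis using Y1 Bn[OF True] P1d r1' by (smt (verit))
    next
      case nb: False
      have "d - 3 \<le> ?M" using Mneed dk by linarith
      then have "int d - 3 \<le> int ?M" using d3 by linarith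
      then show ?thesis using Y1 Bb[OF nb] P1d r1' by (smt (verit))
    qed
  qed
qed

end

lemma rotate_cycle:
  assumes "is_cycle V E C"
  shows "is_cycle V E (rotate m C)"
proof -
  let ?L = "length C"
  have L3: "3 \<le> ?L" and ed: "\<And>i. i < ?L \<Longrightarrow> E (C ! i) (C ! ((i + 1) mod ?L))"
    using assms unfolding is_cycle_def by auto
  show ?thesis unfolding is_cycle_def
  proof (intro conjI allI impI)
    show "3 \<le> length (rotate m C)" using L3 by simp
    show "distinct (rotate m C)" using assms unfolding is_cycle_def by simp
    show "set (rotate m C) \<subseteq> V" using assms unfolding is_cycle_def by simp
    fix i assume i: "i < length (rotate m C)"
    then have iL: "i < ?L" by simp
    have Lp: "0 < ?L" using L3 by linarith
    have "(i + 1) mod ?L < ?L" using Lp by (rule mod_less_divisor)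
    then have r2: "rotate m C ! ((i + 1) mod length (rotate m C)) = C ! ((m + (i + 1) mod ?L) mod ?L)"
      by (simp add: nth_rotate)
    have r1: "rotate m C ! i = C ! ((m + i) mod ?L)" using iL by (simp add: nth_rotate)
    have "(m + (i + 1) mod ?L) mod ?L = ((m + i) mod ?L + 1) mod ?L" by (simp add: mod_add_right_eq mod_Suc_eq)
    moreover have "(m + i) mod ?L < ?L" using Lp by (rule mod_less_divisor)
    ultimately show "E (rotate m C ! i) (rotate m C ! ((i + 1) mod length (rotate m C)))"
      using ed[of "(m + i) mod ?L"] r1 r2 by simp
  qed
qed

theorem lemma2:
  fixes X Y :: "'a set" and E :: "'a \<Rightarrow> 'a \<Rightarrow> bool" and C :: "'a list" and x :: 'a
    and n m \<delta> :: nat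
  assumes "bipartite_graph X Y E"
    and "card X = n" and "n \<ge> 2" and "card Y = m"
    and "\<forall>v \<in> X. card (nbhd E v) \<ge> \<delta>"
    and "tight_pair X Y E C x"
    and "2 \<le> card (nbhd E x \<inter> set C)"
    and "card (nbhd E x \<inter> set C) < card (Y \<inter> set C)"
    and "n \<le> \<delta>"
  shows "int m \<ge> 3 * int \<delta> - 4"
proof -
  have lcC: "longest_cycle (X \<union> Y) E C" and xX: "x \<in> X" and xC: "x \<notin> set C"
    and tg: "\<And>C' x'. longest_cycle (X \<union> Y) E C' \<Longrightarrow> x' \<in> X - set C' \<Longrightarrow>
                card (nbhd E x' \<inter> set C') \<le> card (nbhd E x \<inter> set C)"
    using assms(6) unfolding tight_pair_def by auto
  have "nbhd E x \<inter> set C \<noteq> {}" using assms(7) by (metis card.empty not_numeral_le_zero)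
  then obtain y where y: "y \<in> nbhd E x" "y \<in> set C" by blast
  then obtain i where i: "i < length C" "C ! i = y" by (metis in_set_conv_nth)
  define C' where "C' = rotate i C"
  have cyc: "is_cycle (X \<union> Y) E C" using lcC unfolding longest_cycle_def by blast
  have cyc': "is_cycle (X \<union> Y) E C'" unfolding C'_def using cyc by (rule rotate_cycle)
  have lenC': "length C' = length C" and setC': "set C' = set C" unfolding C'_def by auto
  have lc': "longest_cycle (X \<union> Y) E C'"
    using cyc' lcC lenC' unfolding longest_cycle_def by simp
  have C'0: "C' ! 0 = C ! i"
  proof -
    have "0 < length C" "C \<noteq> []" using i by auto
    then show ?thesis unfolding C'_def using i by (simp add: nth_rotate)
  qed
  interpret L: lc X Y E C' x \<delta>
  proof
    show "bipartite_graph X Y E" by fact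
    show "longest_cycle (X \<union> Y) E C'" by fact
    show "x \<in> X" by fact
    show "x \<notin> set C'" using xC setC' by simp
    show "card (nbhd E x' \<inter> set C'') \<le> card (nbhd E x \<inter> set C')"
      if "longest_cycle (X \<union> Y) E C''" "x' \<in> X - set C''" for C'' x'
      using tg[OF that] setC' by simp
    show "\<delta> \<le> card (nbhd E v)" if "v \<in> X" for v using assms(5) that by blast
    show "E x (C' ! 0)" using C'0 i y unfolding nbhd_def by simp
  qed
  have dd: "L.d = card (nbhd E x \<inter> set C)" unfolding L.d_def using setC' by simp
  have d2: "2 \<le> L.d" using dd assms(7) by simp
  have dk: "L.d < L.k" using dd assms(8) L.card_YC setC' by simp
  have kd: "L.k < \<delta>"
  proof -
    have "insert x (X \<inter> set C') \<subseteq> X" using xX by blast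
    then have "card (insert x (X \<inter> set C')) \<le> card X" using L.finX by (intro card_mono) auto
    moreover have "card (insert x (X \<inter> set C')) = L.k + 1" using L.card_XC xC setC' by simp
    ultimately show ?thesis using assms(2,9) by simp
  qed
  show ?thesis using L.main[OF d2 dk kd] assms(4) by simp
qed

end
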